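(* Let $\sigma^2>0$, $a>1$, let $Z_i$ be i.i.d. $\mathcal{N}(0,\sigma^2)$, $U_0=0$, $U_i=aU_{i-1}+Z_i$ for $i\ge1$, and $\hat a_{\mathrm{ML}}(u_1^n)=\frac{\sum_{i=1}^{n-1}u_iu_{i+1}}{\sum_{i=1}^{n-1}u_i^2}$. Then there exists a constant $c\ge\frac12\log a$ such that for all $n$ large enough, $$\mathbb{P}\left[|\hat a_{\mathrm{ML}}(U_1^n)-a|\ge\sqrt{\frac{\log\log n}{n}}\right]\le 2e^{-cn}.$$
   Context: Logarithms are natural. *)

theory Defs
  imports "HOL-Probability.Probability"
begin

fun ar_proc :: "real \<Rightarrow> (nat \<Rightarrow> real) \<Rightarrow> nat \<Rightarrow> real" where
  "ar_proc a z 0 = 0"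
| "ar_proc a z (Suc i) = a * ar_proc a z i + z (Suc i)"

definition a_ML :: "(nat \<Rightarrow> real) \<Rightarrow> nat \<Rightarrow> real" where
  "a_ML u n = (\<Sum>i=1..n-1. u i * u (i+1)) / (\<Sum>i=1..n-1. (u i)\<^sup>2)"

end

theory Submission imports Defs "HOL-Real_Asymp.Real_Asymp" begin

lemma nd_le: assumes "s > 0" shows "normal_density 0 s x \<le> 1 / s"
proof -
  have "sqrt (2*pi*(s^2)) = sqrt (2*pi) * s" using assms by (simp add: real_sqrt_mult)
  moreover have "sqrt (2*pi) \<ge> 1" using pi_gt3 by simp
  ultimately have h: "sqrt (2*pi*(s^2)) \<ge> s" using assms by (metis mult_le_cancel_right1 order_less_imp_not_less)
  have "exp (-(x - 0)\<^sup>2/ (2 * s\<^sup>2)) \<le> 1" by simp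
  then have "normal_density 0 s x \<le> 1 / sqrt (2*pi*(s^2))"
    unfolding normal_density_def by (rule mult_left_le) simp_all
  also have "\<dots> \<le> 1/s" using h assms by (simp add: frac_le)
  finally show ?thesis .
qed

lemma small_ball:
  assumes P: "prob_space M" and D: "distributed M lborel X (normal_density 0 s)" and s: "s>0" and d: "d \<ge> 0"
  shows "measure M {\<omega>\<in>space M. \<bar>X \<omega>\<bar> < d} \<le> 2*d/s"
proof -
  have eq: "{\<omega>\<in>space M. \<bar>X \<omega>\<bar> < d} = X -` {-d<..<d} \<inter> space M" by auto
  have "emeasure M {\<omega>\<in>space M. \<bar>X \<omega>\<bar> < d} = (\<integral>\<^sup>+x. ennreal (normal_density 0 s x) * indicator {-d<..<d} x \<partial>lborel)"
    unfolding eq by (rule distributed_emeasure[OF D]) simp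
  also have "\<dots> \<le> (\<integral>\<^sup>+x. ennreal (1/s) * indicator {-d<..<d} x \<partial>lborel)"
    apply (rule nn_integral_mono)
    using nd_le[OF s] by (auto simp: indicator_def intro!: ennreal_leI)
  also have "\<dots> = ennreal (1/s) * ennreal (2*d)"
    using d by (simp add: nn_integral_cmult_indicator)
  also have "\<dots> = ennreal (2*d/s)" using s d by (simp add: ennreal_mult'[symmetric])
  finally have "ennreal (measure M {\<omega>\<in>space M. \<bar>X \<omega>\<bar> < d}) \<le> ennreal (2*d/s)"
    using finite_measure.emeasure_eq_measure[OF prob_space.finite_measure[OF P]] by metis
  then show ?thesis using s d by (simp add: ennreal_le_iff)
qed

lemma tail_bound:
  assumes P: "prob_space M" and D: "distributed M lborel X (normal_density 0 s)" and s: "s>0" and B: "B > 0"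
  shows "measure M {\<omega>\<in>space M. \<bar>X \<omega>\<bar> \<ge> B} \<le> s\<^sup>2/B\<^sup>2"
proof -
  interpret prob_space M by (rule P)
  have m[measurable]: "X \<in> borel_measurable M" using D by (simp add: distributed_def)
  have "integrable lborel (\<lambda>x. normal_density 0 s x * (x - 0)^2)" using s by (rule integrable_normal_moment)
  then have i: "integrable M (\<lambda>x. (X x)^2)"
    using distributed_integrable[OF D, of "\<lambda>x. x^2"] by simp
  have e: "expectation X = 0" using normal_distributed_expectation[OF s D] .
  have "prob {x\<in>space M. \<bar>X x - expectation X\<bar> \<ge> B} \<le> variance X / B\<^sup>2"
    by (rule Chebyshev_inequality[OF _ i]) (use B s in auto)
  then show ?thesis using e normal_distributed_variance[OF s D] by simp
qed


lemma ar_closed: "ar_proc a z k = (\<Sum>j=1..k. a^(k-j) * z j)"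
proof (induction k)
  case 0 then show ?case by simp
next
  case (Suc k)
  have "(\<Sum>j=1..Suc k. a^(Suc k-j) * z j) = (\<Sum>j=1..k. a^(Suc k-j) * z j) + z (Suc k)"
    by (simp add: sum.cl_ivl_Suc)
  also have "(\<Sum>j=1..k. a^(Suc k-j) * z j) = a * (\<Sum>j=1..k. a^(k-j) * z j)"
    by (simp add: sum_distrib_left Suc_diff_le mult.assoc)
  finally show ?case using Suc by simp
qed

lemma det:
  fixes z :: "nat \<Rightarrow> real"
  assumes n: "n \<ge> 2" and B: "B > 0" and e: "\<epsilon> > 0" and en: "\<epsilon>^2 * real n \<ge> 1"
    and zb: "\<forall>i\<in>{1..n}. \<bar>z i\<bar> < B" and ub: "\<bar>ar_proc a z (n-1)\<bar> \<ge> 2 * real n * B"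
  shows "\<bar>a_ML (ar_proc a z) n - a\<bar> < \<epsilon>"
proof -
  define u where "u = ar_proc a z"
  define k where "k = n - 1"
  have k: "k \<ge> 1" "n = Suc k" using n by (auto simp: k_def)
  define S where "S = (\<Sum>i=1..k. (u i)\<^sup>2)"
  define T where "T = (\<Sum>i=1..k. u i * z (i+1))"
  have Sge: "S \<ge> (u k)\<^sup>2" unfolding S_def
    by (rule member_le_sum) (use k in auto)
  have d: "(u k)\<^sup>2 \<ge> (2 * real n * B)^2" using ub B unfolding u_def k_def
    by (metis abs_ge_zero abs_of_nonneg power2_abs power_mono zero_le_mult_iff zero_le_numeral of_nat_0_le_iff less_imp_le)
  have Spos: "S > 0" using Sge d B n by (smt (verit) mult_pos_pos of_nat_0_less_iff zero_less_power  less_le_trans zero_less_numeral)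
  have num: "(\<Sum>i=1..k. u i * u (i+1)) = a * S + T"
    unfolding S_def T_def u_def by (simp add: sum_distrib_left sum.distrib[symmetric] algebra_simps power2_eq_square)
  have aml: "a_ML u n - a = T / S"
    unfolding a_ML_def using num Spos k(2) unfolding S_def by (simp add: field_simps)
  have "\<bar>T\<bar> \<le> (\<Sum>i=1..k. \<bar>u i * z (i+1)\<bar>)" unfolding T_def by (rule sum_abs)
  also have "\<dots> \<le> (\<Sum>i=1..k. (\<epsilon> * (u i)\<^sup>2 + B^2/\<epsilon>)/2)"
  proof (rule sum_mono)
    fix i assume i: "i \<in> {1..k}"
    then have "\<bar>z (i+1)\<bar> < B" using zb k by auto
    then have "\<bar>u i * z (i+1)\<bar> \<le> \<bar>u i\<bar> * B" by (simp add: abs_mult mult_left_mono)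
    also have "\<dots> \<le> (\<epsilon> * (u i)\<^sup>2 + B^2/\<epsilon>)/2"
    proof -
      have "0 \<le> (\<epsilon> * \<bar>u i\<bar> - B)^2" by simp
      then have "2 * \<epsilon> * (\<bar>u i\<bar> * B) \<le> \<epsilon>^2 * (u i)\<^sup>2 + B^2"
        by (simp add: power2_eq_square algebra_simps)
      then show ?thesis using e by (simp add: field_simps power2_eq_square)
    qed
    finally show "\<bar>u i * z (i+1)\<bar> \<le> (\<epsilon> * (u i)\<^sup>2 + B^2/\<epsilon>)/2" .
  qed
  also have "\<dots> = (\<epsilon> * S + real k * B^2/\<epsilon>)/2"
    unfolding S_def by (simp add: sum_divide_distrib[symmetric] sum.distrib sum_distrib_left)
  also have "\<dots> < \<epsilon> * S"
  proof -
    have "real k * B^2 < real n * B^2" using k B by simp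
    also have "\<dots> \<le> \<epsilon>^2 * real n * (real n * B^2)" using mult_right_mono[OF en, of "real n * B^2"] B by simp
    also have "\<dots> \<le> \<epsilon>^2 * S" 
    proof -
      have "real n * (real n * B^2) \<le> (2 * real n * B)^2" using B by (simp add: power2_eq_square)
      also have "\<dots> \<le> S" using Sge d by simp
      finally show ?thesis using en e by (smt (verit) mult_left_mono mult.assoc zero_le_power2 mult_nonneg_nonneg of_nat_0_le_iff)
    qed
    finally have "real k * B^2 / \<epsilon> < \<epsilon> * S" using e by (simp add: field_simps power2_eq_square)
    then show ?thesis by (simp add: mult.commute)
  qed
  finally have "\<bar>T\<bar> < \<epsilon> * S" .
  then show ?thesis using aml Spos unfolding u_def by (simp add: abs_divide pos_divide_less_eq)
qed


lemma u_dist: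
  assumes P: "prob_space M" and s: "\<sigma> > 0" and a: "a > 0"
    and ind: "prob_space.indep_vars M (\<lambda>_. borel) Z {1..}"
    and nd: "\<And>i. i \<ge> 1 \<Longrightarrow> distributed M lborel (Z i) (normal_density 0 \<sigma>)"
    and k: "k \<ge> 1"
  shows "\<exists>t \<ge> \<sigma> * a^(k-1). distributed M lborel (\<lambda>\<omega>. ar_proc a (\<lambda>i. Z i \<omega>) k) (normal_density 0 t)"
proof -
  interpret prob_space M by (rule P)
  define X where "X = (\<lambda>j \<omega>. a^(k-j) * Z j \<omega>)"
  have Xd: "distributed M lborel (X j) (normal_density 0 (a^(k-j)*\<sigma>))" if "j \<in> {1..k}" for j
    using normal_density_affine[OF nd[of j] s, of "a^(k-j)" 0] that a unfolding X_def by simp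
  have ind2: "indep_vars (\<lambda>_. borel) X {1..k}"
    unfolding X_def
    by (rule indep_vars_compose2[OF indep_vars_subset[OF ind], where Y="\<lambda>j x. a^(k-j) * x"]) auto
  have D: "distributed M lborel (\<lambda>x. \<Sum>j\<in>{1..k}. X j x) (normal_density (\<Sum>j\<in>{1..k}. 0) (sqrt (\<Sum>j\<in>{1..k}. (a^(k-j)*\<sigma>)\<^sup>2)))"
    by (rule sum_indep_normal[OF _ _ ind2]) (use k a s Xd in auto)
  have "sqrt (\<Sum>j\<in>{1..k}. (a^(k-j)*\<sigma>)\<^sup>2) \<ge> sqrt ((a^(k-1)*\<sigma>)\<^sup>2)"
    by (rule real_sqrt_le_mono, rule member_le_sum) (use k in auto)
  then have "sqrt (\<Sum>j\<in>{1..k}. (a^(k-j)*\<sigma>)\<^sup>2) \<ge> \<sigma> * a^(k-1)" using a s by (simp add: mult.commute)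
  moreover have "(\<lambda>x. \<Sum>j\<in>{1..k}. X j x) = (\<lambda>\<omega>. ar_proc a (\<lambda>i. Z i \<omega>) k)"
    unfolding X_def by (simp add: ar_closed)
  ultimately show ?thesis using D by auto
qed


theorem corollary1:
  fixes M :: "'s measure" and Z :: "nat \<Rightarrow> 's \<Rightarrow> real" and \<sigma> a :: real
  assumes "prob_space M"
    and "\<sigma> > 0" and "a > 1"
    and "prob_space.indep_vars M (\<lambda>_. borel) Z {1..}"
    and "\<And>i. i \<ge> 1 \<Longrightarrow> distributed M lborel (Z i) (normal_density 0 \<sigma>)"
  shows "\<exists>c \<ge> ln a / 2. \<exists>N. \<forall>n \<ge> N.
           measure M {\<omega> \<in> space M.
              \<bar>a_ML (ar_proc a (\<lambda>i. Z i \<omega>)) n - a\<bar> \<ge> sqrt (ln (ln (real n)) / real n)}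
           \<le> 2 * exp (- c * real n)"
proof -
  note P = assms(1) and s = assms(2) and a1 = assms(3) and ind = assms(4) and nd = assms(5)
  interpret prob_space M by (rule P)
  define L where "L = ln a"
  have L: "L > 0" using a1 unfolding L_def by simp
  have a: "a > 0" using a1 by simp
  define K where "K = \<sigma>^2 + 4 * a^2 / \<sigma>"
  have ev: "eventually (\<lambda>n. real n * K \<le> 2 * exp(real n * L / 6)) sequentially"
    using L by real_asymp
  have ev2: "eventually (\<lambda>n. n \<ge> max 2 (nat \<lceil>exp (exp 1) :: real\<rceil>)) sequentially"
    by (rule eventually_ge_at_top)
  obtain N where N: "\<And>n. n \<ge> N \<Longrightarrow> real n * K \<le> 2 * exp(real n * L / 6) \<and> n \<ge> max 2 (nat \<lceil>exp (exp 1) :: real\<rceil>)"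
    using eventually_conj[OF ev ev2] unfolding eventually_sequentially by blast
  show ?thesis
  proof (intro exI[of _ "L/2"] conjI exI[of _ N] allI impI)
    show "L/2 \<ge> ln a / 2" unfolding L_def by simp
    fix n assume nN: "n \<ge> N"
    have nK: "real n * K \<le> 2 * exp(real n * L / 6)" and n2: "n \<ge> 2" and nee: "real n \<ge> exp (exp 1)"
      using N[OF nN] by (auto simp: nat_le_iff ceiling_le_iff)
    define \<epsilon> where "\<epsilon> = sqrt (ln (ln (real n)) / real n)"
    have lnn: "ln (real n) \<ge> exp 1"
      using nee by (metis exp_gt_zero ln_exp ln_le_cancel_iff order_less_le_trans)
    have llnn: "ln (ln (real n)) \<ge> 1"
      using lnn by (metis exp_gt_zero ln_exp ln_le_cancel_iff order_less_le_trans)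
    have npos: "real n > 0" using n2 by simp
    have e: "\<epsilon> > 0" unfolding \<epsilon>_def using llnn npos by simp
    have en: "\<epsilon>^2 * real n \<ge> 1" unfolding \<epsilon>_def using llnn npos by simp
    define k where "k = n - 1"
    have k: "k \<ge> 1" using n2 by (simp add: k_def)
    obtain t where t: "t \<ge> \<sigma> * a^(k-1)" and Dt: "distributed M lborel (\<lambda>\<omega>. ar_proc a (\<lambda>i. Z i \<omega>) k) (normal_density 0 t)"
      using u_dist[OF P s a ind nd k] by blast
    have tpos: "t > 0" using t s a by (smt (verit) mult_pos_pos zero_less_power)
    define E where "E = exp (real n * L / 6)"
    have Epos: "E > 0" unfolding E_def by simp
    define B where "B = E^2"
    have Bpos: "B > 0" unfolding B_def using Epos by simp
    define \<delta> where "\<delta> = 2 * real n * B"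
    define A where "A = (\<lambda>i. {\<omega>\<in>space M. B \<le> \<bar>Z i \<omega>\<bar>})"
    define C where "C = {\<omega>\<in>space M. \<bar>ar_proc a (\<lambda>i. Z i \<omega>) k\<bar> < \<delta>}"
    have Zm: "Z i \<in> borel_measurable M" if "i \<ge> 1" for i using nd[OF that] by (simp add: distributed_def)
    have um: "(\<lambda>\<omega>. ar_proc a (\<lambda>i. Z i \<omega>) k) \<in> borel_measurable M" using Dt by (simp add: distributed_def)
    have Asets: "A i \<in> sets M" if "i \<ge> 1" for i unfolding A_def using Zm[OF that] by measurable
    have Csets: "C \<in> sets M" unfolding C_def using um by measurable
    have Usets: "(\<Union>i\<in>{1..n}. A i) \<in> sets M" using Asets by auto
    have sub: "{\<omega> \<in> space M. \<bar>a_ML (ar_proc a (\<lambda>i. Z i \<omega>)) n - a\<bar> \<ge> \<epsilon>} \<subseteq> (\<Union>i\<in>{1..n}. A i) \<union> C"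
    proof
      fix \<omega> assume w: "\<omega> \<in> {\<omega> \<in> space M. \<bar>a_ML (ar_proc a (\<lambda>i. Z i \<omega>)) n - a\<bar> \<ge> \<epsilon>}"
      show "\<omega> \<in> (\<Union>i\<in>{1..n}. A i) \<union> C"
      proof (rule ccontr)
        assume "\<omega> \<notin> (\<Union>i\<in>{1..n}. A i) \<union> C"
        then have zb: "\<forall>i\<in>{1..n}. \<bar>Z i \<omega>\<bar> < B" and ub: "\<bar>ar_proc a (\<lambda>i. Z i \<omega>) (n-1)\<bar> \<ge> 2 * real n * B"
          using w unfolding A_def C_def \<delta>_def k_def by auto
        have "\<bar>a_ML (ar_proc a (\<lambda>i. Z i \<omega>)) n - a\<bar> < \<epsilon>"
          by (rule det[OF n2 Bpos e en zb ub])
        then show False using w by auto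
      qed
    qed
    have "measure M {\<omega> \<in> space M. \<bar>a_ML (ar_proc a (\<lambda>i. Z i \<omega>)) n - a\<bar> \<ge> \<epsilon>}
          \<le> measure M ((\<Union>i\<in>{1..n}. A i) \<union> C)"
      by (rule finite_measure_mono[OF sub]) (use Usets Csets in auto)
    also have "\<dots> \<le> measure M (\<Union>i\<in>{1..n}. A i) + measure M C"
      by (rule measure_subadditive[OF Usets Csets]) simp_all
    also have "measure M (\<Union>i\<in>{1..n}. A i) \<le> (\<Sum>i\<in>{1..n}. measure M (A i))"
      by (rule finite_measure_subadditive_finite) (use Asets in auto)
    also have "(\<Sum>i\<in>{1..n}. measure M (A i)) \<le> (\<Sum>i\<in>{1..n}. \<sigma>^2 / B^2)"
      by (rule sum_mono) (unfold A_def, rule tail_bound[OF P nd s Bpos], auto)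
    also have "measure M C \<le> 2 * \<delta> / t"
      unfolding C_def by (rule small_ball[OF P Dt tpos]) (use Bpos in \<open>simp add: \<delta>_def\<close>)
    finally have m1: "measure M {\<omega> \<in> space M. \<bar>a_ML (ar_proc a (\<lambda>i. Z i \<omega>)) n - a\<bar> \<ge> \<epsilon>}
          \<le> real n * \<sigma>^2 / B^2 + 2 * \<delta> / t" by simp
    have an: "a^n = E^6"
    proof -
      have "a^n = exp (real n * L)" unfolding L_def using a by (simp add: exp_of_nat_mult)
      also have "\<dots> = E^6" unfolding E_def by (simp add: exp_of_nat_mult[symmetric])
      finally show ?thesis .
    qed
    have kn: "k - 1 + 2 = n" using n2 unfolding k_def by simp
    have ak: "a^(k-1) * a^2 = a^n" using kn by (metis power_add)
    have "2 * \<delta> / t \<le> 4 * real n * B / (\<sigma> * a^(k-1))"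
      unfolding \<delta>_def using t tpos Bpos s a npos by (simp add: frac_le)
    also have "\<dots> = 4 * a^2 / \<sigma> * real n / E^4"
    proof -
      have "\<sigma> * a^(k-1) = \<sigma> * E^6 / a^2" using ak an a by (simp add: field_simps)
      then show ?thesis unfolding B_def using s a Epos by (simp add: field_simps eval_nat_numeral)
    qed
    finally have m2: "2 * \<delta> / t \<le> 4 * a^2 / \<sigma> * real n / E^4" .
    have "real n * \<sigma>^2 / B^2 + 2 * \<delta> / t \<le> real n * K / E^4"
    proof -
      have "real n * K / E^4 = real n * \<sigma>^2 / B^2 + 4 * a^2 / \<sigma> * real n / E^4"
        unfolding B_def K_def using s Epos by (simp add: field_simps power_mult[symmetric])
      then show ?thesis using m2 by linarith
    qed
    also have "\<dots> \<le> 2 * E / E^4" using nK Epos unfolding E_def by (simp add: divide_right_mono)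
    also have "\<dots> = 2 * exp (- (L/2) * real n)"
    proof -
      have "E^3 = exp (real n * L / 2)" unfolding E_def by (simp add: exp_of_nat_mult[symmetric])
      then show ?thesis using Epos by (simp add: eval_nat_numeral exp_minus field_simps)
    qed
    finally show "measure M {\<omega> \<in> space M. \<bar>a_ML (ar_proc a (\<lambda>i. Z i \<omega>)) n - a\<bar> \<ge> sqrt (ln (ln (real n)) / real n)}
           \<le> 2 * exp (- (L/2) * real n)" using m1 unfolding \<epsilon>_def by linarith
  qed
qed

end
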